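(* Let $n\ge2$ and $1\le r\le n-1$, and let $M$ be an invertible real $n\times n$ matrix. Let $\mathcal{M}$ be the set of all $P\in\mathbb{R}^{r\times(n-r)}$ such that $$\begin{pmatrix}\mathrm{Id}_r&P\\0&\mathrm{Id}_{n-r}\end{pmatrix}^{-1}M\begin{pmatrix}\mathrm{Id}_r&P\\0&\mathrm{Id}_{n-r}\end{pmatrix}=\begin{pmatrix}*&*\\ *&\hat M\end{pmatrix}$$ with $\hat M$ (the bottom-right $(n-r)\times(n-r)$ block) invertible. Then $\mathcal{M}$ is open and dense in $\mathbb{R}^{r\times(n-r)}$. *)

theory Defs
  imports "HOL-Analysis.Analysis"
begin

text \<open>An n x n matrix is indexed by the disjoint sum 'r + 's, where CARD('r) = r and
  CARD('s) = n - r; the first r coordinates are Inl i, the last n - r are Inr j.\<close>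

definition unipotent_block :: "real^'s::finite^'r::finite \<Rightarrow> real^('r + 's)^('r + 's)" where
  "unipotent_block P = (\<chi> a b.
     (case a of
        Inl i \<Rightarrow> (case b of Inl j \<Rightarrow> (if i = j then 1 else 0) | Inr j \<Rightarrow> P $ i $ j)
      | Inr i \<Rightarrow> (case b of Inl j \<Rightarrow> 0 | Inr j \<Rightarrow> (if i = j then 1 else 0))))"

definition bottom_right_block :: "real^('r::finite + 's::finite)^('r + 's) \<Rightarrow> real^'s^'s" where
  "bottom_right_block A = (\<chi> i j. A $ Inr i $ Inr j)"

end

theory Submission imports Defs "HOL-Computational_Algebra.Polynomial" begin

lemma sum_UNIV_Plus: "(\<Sum>a\<in>(UNIV::('r::finite + 's::finite) set). f a) = (\<Sum>i\<in>UNIV. f (Inl i)) + (\<Sum>j\<in>UNIV. f (Inr j))"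
  by (subst UNIV_Plus_UNIV[symmetric], subst sum.Plus) auto

lemma unip_simps:
  "unipotent_block P $ Inl i $ Inl j = (if i = j then 1 else 0)"
  "unipotent_block P $ Inl i $ Inr k = P $ i $ k"
  "unipotent_block P $ Inr k $ Inl j = 0"
  "unipotent_block P $ Inr k $ Inr l = (if k = l then 1 else 0)"
  by (simp_all add: unipotent_block_def)

lemma ifm: "(if c then 1 else 0) * (x::real) = (if c then x else 0)" "x * (if c then 1 else 0) = (if c then x else 0)"
  by simp_all

lemma matrix_inv_eq:
  fixes A B :: "'a::semiring_1^'n::finite^'n"
  assumes "A ** B = mat 1" "B ** A = mat 1"
  shows "matrix_inv A = B"
proof -
  have ex: "\<exists>X. A ** X = mat 1 \<and> X ** A = mat 1" using assms by blast
  then have "A ** matrix_inv A = mat 1 \<and> matrix_inv A ** A = mat 1"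
    unfolding matrix_inv_def by (rule someI_ex)
  then have "matrix_inv A = matrix_inv A ** (A ** B)" using assms by (simp add: matrix_mul_rid)
  also have "\<dots> = B" using \<open>A ** matrix_inv A = mat 1 \<and> matrix_inv A ** A = mat 1\<close>
    by (simp add: matrix_mul_assoc matrix_mul_lid)
  finally show ?thesis .
qed

lemma unip_inv: "unipotent_block P ** unipotent_block (- P) = mat 1"
  unfolding vec_eq_iff
proof (intro allI)
  fix a b :: "'a + 'b"
  show "(unipotent_block P ** unipotent_block (- P)) $ a $ b = mat 1 $ a $ b"
    by (cases a; cases b) (simp_all add: matrix_matrix_mult_def sum_UNIV_Plus unip_simps mat_def ifm sum.delta sum.delta')
qed

lemma unip_inv2: "unipotent_block (-P) ** unipotent_block P = mat 1"
  using unip_inv[of "-P"] by simp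

lemma br: "bottom_right_block (matrix_inv (unipotent_block P) ** M ** unipotent_block P)
   = (\<chi> i j. M $ Inr i $ Inl j) ** P + bottom_right_block M"
  unfolding matrix_inv_eq[OF unip_inv unip_inv2]
  by (simp add: vec_eq_iff bottom_right_block_def matrix_matrix_mult_def sum_UNIV_Plus unip_simps ifm sum.delta sum.delta')

lemma det_affine_poly:
  fixes X Y :: "real^'n::finite^'n"
  shows "\<exists>p. \<forall>t. det (X + t *\<^sub>R Y) = poly p t"
proof (intro exI allI)
  fix t
  show "det (X + t *\<^sub>R Y) = poly (\<Sum>\<sigma>\<in>{\<sigma>. \<sigma> permutes UNIV}. [:of_int (sign \<sigma>):] * (\<Prod>i\<in>UNIV. [:X$i$\<sigma> i, Y$i$\<sigma> i:])) t"
    by (simp add: det_def poly_sum poly_prod algebra_simps)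
qed

lemma inv_ker:
  fixes A :: "real^'n::finite^'n"
  shows "invertible A \<longleftrightarrow> (\<forall>x. A *v x = 0 \<longrightarrow> x = 0)"
  by (simp add: invertible_left_inverse matrix_left_invertible_ker)

lemma neg_mv: "(- X) *v (y::real^'n::finite) = - (X *v y)"
  by (simp add: vec_eq_iff matrix_vector_mult_def sum_negf)

lemma mv_neg: "X *v (- (y::real^'n::finite)) = - (X *v y)"
  by (simp add: vec_eq_iff matrix_vector_mult_def sum_negf)

lemma scaleR_mv: "(c *\<^sub>R X) *v (y::real^'n::finite) = c *\<^sub>R (X *v y)"
  by (simp add: vec_eq_iff matrix_vector_mult_def sum_distrib_left mult.assoc)

lemma mv_Inl: "(Z *v (v::real^('r::finite+'s::finite))) $ Inl i
   = ((\<chi> i j. Z $ Inl i $ Inl j) *v (\<chi> k. v $ Inl k)) $ i + ((\<chi> i j. Z $ Inl i $ Inr j) *v (\<chi> k. v $ Inr k)) $ i"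
  by (simp add: matrix_vector_mult_def sum_UNIV_Plus)

lemma mv_Inr: "(Z *v (v::real^('r::finite+'s::finite))) $ Inr i
   = ((\<chi> i j. Z $ Inr i $ Inl j) *v (\<chi> k. v $ Inl k)) $ i + ((\<chi> i j. Z $ Inr i $ Inr j) *v (\<chi> k. v $ Inr k)) $ i"
  by (simp add: matrix_vector_mult_def sum_UNIV_Plus)

lemma schur:
  fixes Z :: "real^('r::finite+'s::finite)^('r+'s)"
  assumes Z: "invertible Z" and A: "invertible (\<chi> i j. Z $ Inl i $ Inl j)"
  shows "\<exists>P. invertible ((\<chi> i j. Z $ Inr i $ Inl j) ** P + (\<chi> i j. Z $ Inr i $ Inr j))"
proof -
  define Aa where "Aa = (\<chi> i j. Z $ Inl i $ Inl j)"
  define B where "B = (\<chi> i j. Z $ Inl i $ Inr j)"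
  define C where "C = (\<chi> i j. Z $ Inr i $ Inl j)"
  define D where "D = (\<chi> i j. Z $ Inr i $ Inr j)"
  obtain Ai where Ai: "Aa ** Ai = mat 1" using A unfolding Aa_def invertible_def by blast
  define P where "P = - (Ai ** B)"
  have "invertible (C ** P + D)"
    unfolding inv_ker
  proof (intro allI impI)
    fix y assume y: "(C ** P + D) *v y = 0"
    define x where "x = P *v y"
    define v :: "real^('r+'s)" where "v = (\<chi> a. case a of Inl i \<Rightarrow> x $ i | Inr j \<Rightarrow> y $ j)"
    have vl: "(\<chi> k. v $ Inl k) = x" and vr: "(\<chi> k. v $ Inr k) = y"
      by (simp_all add: v_def vec_eq_iff)
    have "Aa *v x = - (B *v y)"
      by (simp add: x_def P_def neg_mv mv_neg matrix_vector_mul_assoc matrix_mul_assoc Ai)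
    moreover have "C *v x + D *v y = 0"
      using y by (simp add: x_def matrix_vector_mult_add_rdistrib matrix_vector_mul_assoc)
    ultimately have "Z *v v = 0"
      unfolding vec_eq_iff
      apply (intro allI)
      subgoal for a
        by (cases a) (simp_all add: mv_Inl mv_Inr vl vr flip: Aa_def B_def C_def D_def add: vec_eq_iff)
      done
    then have "v = 0" using Z inv_ker by blast
    then show "y = 0" using vr by (metis vec_lambda_unique zero_index)
  qed
  then show ?thesis unfolding C_def D_def by blast
qed

lemma exists_good:
  fixes M :: "real^('r::finite+'s::finite)^('r+'s)"
  assumes "invertible M"
  shows "\<exists>P. invertible ((\<chi> i j. M $ Inr i $ Inl j) ** P + bottom_right_block M)"
proof -
  define E :: "real^('r+'s)^('r+'s)" where "E = (\<chi> a b. if a = b \<and> isl a then 1 else 0)"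
  obtain p where p: "\<forall>t. det (M + t *\<^sub>R E) = poly p t" using det_affine_poly by blast
  have "det M \<noteq> 0" using assms invertible_det_nz by blast
  hence "p \<noteq> 0" using p[rule_format, of 0] by auto
  hence fin: "finite {t. poly p t = 0}" by (rule poly_roots_finite)
  define Aa where "Aa = (\<chi> i j. M $ Inl i $ Inl j)"
  obtain K where K: "\<And>x. norm (Aa *v x) \<le> norm x * K" "K > 0"
    using bounded_linear.pos_bounded[OF matrix_vector_mul_bounded_linear[of Aa]] by blast
  have "infinite ({K+1..K+2} - {t. poly p t = 0})"
    using fin by (intro Diff_infinite_finite) auto
  then obtain t where t: "t \<in> {K+1..K+2}" "poly p t \<noteq> 0"
    by (metis (mono_tags, lifting) Diff_iff ex_in_conv finite.emptyI mem_Collect_eq)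
  define Z where "Z = M + t *\<^sub>R E"
  have Zinv: "invertible Z" using p t by (simp add: Z_def invertible_det_nz)
  have TL: "(\<chi> i j. Z $ Inl i $ Inl j) = Aa + t *\<^sub>R mat 1"
    by (simp add: vec_eq_iff Z_def E_def Aa_def mat_def)
  have "invertible (Aa + t *\<^sub>R mat 1)" unfolding inv_ker
  proof (intro allI impI)
    fix x assume "(Aa + t *\<^sub>R mat 1) *v x = 0"
    hence "Aa *v x = - (t *\<^sub>R x)"
      by (simp add: matrix_vector_mult_add_rdistrib scaleR_mv eq_neg_iff_add_eq_0)
    hence "t * norm x \<le> norm x * K" using K(1)[of x] t(1) K(2) by simp
    hence "(t - K) * norm x \<le> 0" by (simp add: algebra_simps)
    moreover have "t - K > 0" using t(1) by simp
    ultimately have "norm x \<le> 0" by (simp add: mult_le_0_iff)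
    thus "x = 0" by simp
  qed
  with schur[OF Zinv] TL obtain P where
    "invertible ((\<chi> i j. Z $ Inr i $ Inl j) ** P + (\<chi> i j. Z $ Inr i $ Inr j))" by auto
  moreover have "(\<chi> i j. Z $ Inr i $ Inl j) = (\<chi> i j. M $ Inr i $ Inl j)"
    "(\<chi> i j. Z $ Inr i $ Inr j) = bottom_right_block M"
    by (simp_all add: vec_eq_iff Z_def E_def bottom_right_block_def)
  ultimately show ?thesis by auto
qed

theorem lemma5:
  fixes M :: "real^('r::finite + 's::finite)^('r + 's)"
  assumes "invertible M"
  defines "S \<equiv> {P :: real^'s^'r.
     invertible (bottom_right_block
        (matrix_inv (unipotent_block P) ** M ** unipotent_block P))}"
  shows "open S \<and> closure S = UNIV"
proof -
  define Cm where "Cm = (\<chi> i j. M $ Inr i $ Inl j)"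
  define Dm where "Dm = bottom_right_block M"
  have S: "S = {P. det (Cm ** P + Dm) \<noteq> 0}"
    unfolding S_def br Cm_def Dm_def invertible_det_nz by simp
  have h1: "(\<lambda>P. det (Cm ** P + Dm)) = (\<lambda>P. \<Sum>\<sigma>\<in>{\<sigma>. \<sigma> permutes UNIV}. of_int (sign \<sigma>) *
           (\<Prod>i\<in>UNIV. (\<Sum>k\<in>UNIV. Cm$i$k * P$k$(\<sigma> i)) + Dm$i$(\<sigma> i)))"
    by (simp add: det_def matrix_matrix_mult_def)
  have h2: "continuous_on UNIV (\<lambda>P::real^'s^'r. \<Sum>\<sigma>\<in>{\<sigma>. \<sigma> permutes UNIV}. of_int (sign \<sigma>) *
           (\<Prod>i\<in>UNIV. (\<Sum>k\<in>UNIV. Cm$i$k * P$k$(\<sigma> i)) + Dm$i$(\<sigma> i)))"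
    by (intro continuous_intros)
  have cont: "continuous_on UNIV (\<lambda>P. det (Cm ** P + Dm))" unfolding h1 by (rule h2)
  have op: "open S" unfolding S using open_Collect_neq[OF cont continuous_on_const] by simp
  obtain P1 where P1: "det (Cm ** P1 + Dm) \<noteq> 0"
    using exists_good[OF assms(1)] invertible_det_nz unfolding Cm_def Dm_def by blast
  have "P0 \<in> closure S" for P0
    unfolding closure_approachable
  proof (intro allI impI)
    fix e :: real assume e: "e > 0"
    define Q where "Q = P1 - P0"
    obtain p where p: "\<forall>t. det ((Cm ** P0 + Dm) + t *\<^sub>R (Cm ** Q)) = poly p t"
      using det_affine_poly by blast
    have eq: "Cm ** (P0 + t *\<^sub>R Q) + Dm = (Cm ** P0 + Dm) + t *\<^sub>R (Cm ** Q)" for t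
      by (simp add: vec_eq_iff matrix_matrix_mult_def sum.distrib sum_distrib_left algebra_simps)
    have "p \<noteq> 0" using p[rule_format, of 1] P1 eq[of 1] by (auto simp: Q_def add_ac)
    hence fin: "finite {t. poly p t = 0}" by (rule poly_roots_finite)
    define d where "d = e / (norm Q + 1)"
    have nQ: "norm Q + 1 > 0" by (simp add: add_nonneg_pos)
    have d: "d > 0" using e nQ by (simp add: d_def)
    have "infinite ({d/2..d} - {t. poly p t = 0})"
      using fin d by (intro Diff_infinite_finite) auto
    then obtain t where t: "t \<in> {d/2..d}" "poly p t \<noteq> 0"
      by (metis (mono_tags, lifting) Diff_iff ex_in_conv finite.emptyI mem_Collect_eq)
    have "det (Cm ** (P0 + t *\<^sub>R Q) + Dm) = poly p t"
      unfolding eq by (rule p[rule_format])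
    then have "P0 + t *\<^sub>R Q \<in> S" unfolding S using t by simp
    moreover have "dist (P0 + t *\<^sub>R Q) P0 < e"
    proof -
      have "dist (P0 + t *\<^sub>R Q) P0 = t * norm Q" using t d by (simp add: dist_norm)
      also have "\<dots> \<le> d * norm Q" using t by (simp add: mult_right_mono)
      also have "\<dots> = e * (norm Q / (norm Q + 1))" by (simp add: d_def)
      also have "\<dots> < e * 1" using e nQ by (intro mult_strict_left_mono) simp_all
      finally show ?thesis by simp
    qed
    ultimately show "\<exists>y\<in>S. dist y P0 < e" by blast
  qed
  then show ?thesis using op by auto
qed

end
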